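(* Let $A$ be a real $n\times n$ matrix with strictly negative diagonal and clique complex $X=X(G_A)$, and let $|A|$ denote the matrix of absolute values of the entries of $A$. Suppose $\det A_\sigma=0$ for all $\sigma\in X$ with $|\sigma|=2$ or $3$. Then: (a) if $H^1(X;\mathbb{Z}_2)=0$, then $A$ is a bipartite matrix; (b) if $H^1(X;\mathbb{R})=0$, then $|A|$ has a rank $1$ completion; (c) if $H^1(X;\mathbb{R})=H^1(X;\mathbb{Z}_2)=0$, then $A$ has a rank $1$ completion.
   Context: The connectivity graph $G_A$ is the simple graph on $\{1,\dots,n\}$ containing edge $(ij)$, $i\ne j$, unless $A_{ij}=A_{ji}=0$; $X(G_A)$ is its clique complex, i.e. the abstract simplicial complex of cliques (sets of pairwise adjacent vertices), with simplicial cohomology. $A_\sigma$ is the principal submatrix on $\sigma$. A matrix $\bar A$ is a completion of $A$ if $\bar A_{ij}=A_{ij}$ for all $i=j$ and for all $i\ne j$ with $(ij)$ an edge of $G_A$ (for $|A|$, completions are defined with the same graph $G_A$). A real $n\times n$ matrix $A$ is bipartite if $\{1,\dots,n\}$ can be partitioned into disjoint sets $\sigma,\bar\sigma$ such that: if $i\in\sigma,j\in\bar\sigma$ then $A_{ij}\ge0$ and $A_{ji}\ge0$; and if $i,j\in\sigma$ or $i,j\in\bar\sigma$ then $A_{ij}\le0$ and $A_{ji}\le0$. *)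

theory Defs
  imports "HOL-Analysis.Analysis" "HOL-Library.Z2"
begin

definition conn_adj :: "real^'n^'n \<Rightarrow> 'n \<Rightarrow> 'n \<Rightarrow> bool" where
  "conn_adj A i j \<longleftrightarrow> i \<noteq> j \<and> \<not> (A$i$j = 0 \<and> A$j$i = 0)"

definition clique_simplex :: "real^'n^'n \<Rightarrow> 'n set \<Rightarrow> bool" where
  "clique_simplex A \<sigma> \<longleftrightarrow> \<sigma> \<noteq> {} \<and> (\<forall>i\<in>\<sigma>. \<forall>j\<in>\<sigma>. i \<noteq> j \<longrightarrow> conn_adj A i j)"

definition principal_det :: "real^'n^'n \<Rightarrow> 'n set \<Rightarrow> real" where
  "principal_det A \<sigma> = (\<Sum>p\<in>{p. p permutes \<sigma>}. of_int (sign p) * (\<Prod>i\<in>\<sigma>. A$i$(p i)))"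

text \<open>Vanishing of the first simplicial cohomology, with coefficients in the field 'f, of the
  clique complex of the graph with edge relation adj: every alternating 1-cochain (a function on
  oriented edges) whose coboundary vanishes on all 2-simplices (triangles) is the coboundary of a
  0-cochain.\<close>
definition H1_clique_vanishes :: "('n \<Rightarrow> 'n \<Rightarrow> bool) \<Rightarrow> 'f::field itself \<Rightarrow> bool" where
  "H1_clique_vanishes adj _ \<longleftrightarrow>
     (\<forall>c :: 'n \<Rightarrow> 'n \<Rightarrow> 'f.
        ((\<forall>i j. adj i j \<longrightarrow> c j i = - c i j) \<and>
         (\<forall>i j k. adj i j \<and> adj j k \<and> adj i k \<longrightarrow> c j k - c i k + c i j = 0))
        \<longrightarrow> (\<exists>f :: 'n \<Rightarrow> 'f. \<forall>i j. adj i j \<longrightarrow> c i j = f j - f i))"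

definition bipartite_matrix :: "real^'n^'n \<Rightarrow> bool" where
  "bipartite_matrix A \<longleftrightarrow> (\<exists>\<sigma> :: 'n set.
     (\<forall>i j. i \<in> \<sigma> \<and> j \<notin> \<sigma> \<longrightarrow> A$i$j \<ge> 0 \<and> A$j$i \<ge> 0) \<and>
     (\<forall>i j. ((i \<in> \<sigma> \<and> j \<in> \<sigma>) \<or> (i \<notin> \<sigma> \<and> j \<notin> \<sigma>)) \<longrightarrow> A$i$j \<le> 0 \<and> A$j$i \<le> 0))"

definition abs_matrix :: "real^'n^'n \<Rightarrow> real^'n^'n" where
  "abs_matrix A = (\<chi> i j. \<bar>A$i$j\<bar>)"

definition is_completion :: "real^'n^'n \<Rightarrow> real^'n^'n \<Rightarrow> real^'n^'n \<Rightarrow> bool" where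
  "is_completion A M B \<longleftrightarrow> (\<forall>i. B$i$i = M$i$i) \<and> (\<forall>i j. conn_adj A i j \<longrightarrow> B$i$j = M$i$j)"

end

theory Submission imports Defs begin
lemma pdet2:
  fixes A :: "real^'n^'n"
  assumes "i \<noteq> j"
  shows "principal_det A {i,j} = A$i$i*A$j$j - A$i$j*A$j$i"
proof -
  have f: "finite {j}" "i \<notin> {j}" using assms by auto
  show ?thesis
    unfolding principal_det_def sum_over_permutations_insert[OF f] permutes_sing
    using assms by (simp add: sign_swap_id sign_id swap_id_eq transpose_def)
qed

lemma pdet3:
  fixes A :: "real^'n^'n"
  assumes "i \<noteq> j" "i \<noteq> k" "j \<noteq> k"
  shows "principal_det A {i,j,k} =
    A$i$i * A$j$j * A$k$k + A$i$j * A$j$k * A$k$i + A$i$k * A$j$i * A$k$j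
  - A$i$i * A$j$k * A$k$j - A$i$j * A$j$i * A$k$k - A$i$k * A$j$j * A$k$i"
proof -
  have f1: "finite {j,k}" "i \<notin> {j,k}" using assms by auto
  have f2: "finite {k}" "j \<notin> {k}" using assms by auto
  show ?thesis
    unfolding principal_det_def sum_over_permutations_insert[OF f1] sum_over_permutations_insert[OF f2] permutes_sing
    using assms by (simp add: sign_swap_id permutation_swap_id sign_compose swap_id_eq transpose_def algebra_simps)
qed

lemma rank_outer:
  fixes u v :: "real^'n"
  assumes "u \<noteq> 0" "v \<noteq> 0"
  shows "rank ((\<chi> i j. u$i * v$j) :: real^'n^'n) = 1"
proof -
  let ?B = "(\<chi> i j. u$i * v$j) :: real^'n^'n"
  have "rows ?B \<subseteq> span {v}"
  proof
    fix r assume "r \<in> rows ?B"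
    then obtain i where "r = row i ?B" by (auto simp: rows_def)
    then have "r = u$i *\<^sub>R v" by (simp add: row_def vec_eq_iff)
    then show "r \<in> span {v}" by (simp add: span_base span_scale)
  qed
  then have "dim (rows ?B) \<le> dim (span {v})" by (rule dim_subset)
  also have "\<dots> = dim {v}" by (rule dim_span)
  also have "\<dots> = 1" using assms(2) by (simp add: dim_singleton)
  finally have "rank ?B \<le> 1" unfolding row_rank_def .
  moreover have "?B \<noteq> 0"
  proof -
    obtain i where "u$i \<noteq> 0" using assms(1) by (metis vec_eq_iff zero_index)
    moreover obtain j where "v$j \<noteq> 0" using assms(2) by (metis vec_eq_iff zero_index)
    ultimately have "?B$i$j \<noteq> 0" by simp
    then show ?thesis by (metis zero_index)
  qed
  then have "rank ?B \<noteq> 0" by (simp add: rank_eq_0)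
  ultimately show ?thesis by linarith
qed

lemma edge_prod:
  fixes A :: "real^'n^'n"
  assumes minors: "\<forall>\<sigma>. clique_simplex A \<sigma> \<and> (card \<sigma> = 2 \<or> card \<sigma> = 3) \<longrightarrow> principal_det A \<sigma> = 0"
    and "conn_adj A i j"
  shows "A$i$j*A$j$i = A$i$i*A$j$j"
proof -
  have ij: "i \<noteq> j" using assms(2) by (simp add: conn_adj_def)
  have "clique_simplex A {i,j}" using assms(2) by (auto simp: clique_simplex_def conn_adj_def)
  moreover have "card {i,j} = 2" using ij by simp
  ultimately have "principal_det A {i,j} = 0" using minors by blast
  then show ?thesis using pdet2[OF ij, of A] by simp
qed

lemma tri_prod:
  fixes A :: "real^'n^'n"
  assumes minors: "\<forall>\<sigma>. clique_simplex A \<sigma> \<and> (card \<sigma> = 2 \<or> card \<sigma> = 3) \<longrightarrow> principal_det A \<sigma> = 0"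
    and a1: "conn_adj A i j" and a2: "conn_adj A j k" and a3: "conn_adj A i k"
  shows "A$i$j*A$j$k*A$k$i = A$i$i*A$j$j*A$k$k"
proof -
  have d: "i \<noteq> j" "i \<noteq> k" "j \<noteq> k" using a1 a2 a3 by (auto simp: conn_adj_def)
  have sym: "conn_adj A x y \<Longrightarrow> conn_adj A y x" for x y by (auto simp: conn_adj_def)
  have "clique_simplex A {i,j,k}" using a1 a2 a3 sym by (auto simp: clique_simplex_def)
  moreover have "card {i,j,k} = 3" using d by simp
  ultimately have "principal_det A {i,j,k} = 0" using minors by blast
  then have det: "A$i$i * A$j$j * A$k$k + A$i$j * A$j$k * A$k$i + A$i$k * A$j$i * A$k$j
  - A$i$i * A$j$k * A$k$j - A$i$j * A$j$i * A$k$k - A$i$k * A$j$j * A$k$i = 0"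
    using pdet3[OF d, of A] by simp
  have e1: "A$i$j*A$j$i = A$i$i*A$j$j" using edge_prod[OF minors a1] .
  have e2: "A$j$k*A$k$j = A$j$j*A$k$k" using edge_prod[OF minors a2] .
  have e3: "A$i$k*A$k$i = A$i$i*A$k$k" using edge_prod[OF minors a3] .
  define D where "D = A$i$i*A$j$j*A$k$k"
  define P where "P = A$i$j*A$j$k*A$k$i"
  define Q where "Q = A$i$k * A$j$i * A$k$j"
  have eq: "D + P + Q - A$i$i*(A$j$k*A$k$j) - (A$i$j*A$j$i)*A$k$k - (A$i$k*A$k$i)*A$j$j =
    A$i$i * A$j$j * A$k$k + A$i$j * A$j$k * A$k$i + A$i$k * A$j$i * A$k$j
  - A$i$i * A$j$k * A$k$j - A$i$j * A$j$i * A$k$k - A$i$k * A$j$j * A$k$i"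
    unfolding D_def P_def Q_def by (simp add: algebra_simps)
  have x1: "A$i$i*(A$j$k*A$k$j) = D" using e2 by (simp add: D_def mult.assoc)
  have x2: "(A$i$j*A$j$i)*A$k$k = D" using e1 by (simp add: D_def mult.assoc)
  have x3: "(A$i$k*A$k$i)*A$j$j = D" using e3 by (simp add: D_def algebra_simps)
  have s: "P + Q = 2*D" using eq det x1 x2 x3 by linarith
  have p: "P * Q = D*D"
  proof -
    have "P * Q = (A$i$j*A$j$i)*(A$j$k*A$k$j)*(A$i$k*A$k$i)" unfolding P_def Q_def by (simp add: algebra_simps)
    also have "\<dots> = D*D" using e1 e2 e3 by (simp add: D_def algebra_simps)
    finally show ?thesis .
  qed
  have "(P - D)*(P - D) = 0"
  proof -
    have "(P - D)*(P - D) = P*P - P*(2*D) + D*D" by (simp add: algebra_simps)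
    also have "\<dots> = P*P - P*(P+Q) + P*Q" by (simp only: s p)
    also have "\<dots> = 0" by (simp add: algebra_simps)
    finally show ?thesis .
  qed
  then show ?thesis unfolding P_def D_def by simp
qed


lemma edge_facts:
  fixes A :: "real^'n^'n"
  assumes diag: "\<forall>i. A$i$i < 0"
    and minors: "\<forall>\<sigma>. clique_simplex A \<sigma> \<and> (card \<sigma> = 2 \<or> card \<sigma> = 3) \<longrightarrow> principal_det A \<sigma> = 0"
    and a: "conn_adj A i j"
  shows "A$i$j \<noteq> 0" "A$j$i \<noteq> 0" "A$i$j > 0 \<longleftrightarrow> A$j$i > 0" "\<bar>A$i$j\<bar> * \<bar>A$j$i\<bar> = (- A$i$i) * (- A$j$j)"
proof -
  have e: "A$i$j*A$j$i = A$i$i*A$j$j" using edge_prod[OF minors a] .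
  have p: "A$i$i*A$j$j > 0" using diag by (simp add: mult_neg_neg)
  show "A$i$j \<noteq> 0" "A$j$i \<noteq> 0" using e p by auto
  have pp: "0 < A$i$j*A$j$i" using e p by simp
  then show "A$i$j > 0 \<longleftrightarrow> A$j$i > 0" by (auto simp: zero_less_mult_iff)
  show "\<bar>A$i$j\<bar> * \<bar>A$j$i\<bar> = (- A$i$i) * (- A$j$j)" using e p by (simp add: abs_mult[symmetric])
qed

lemma bit_cases: "(a::bit) = 0 \<or> a = 1" by (metis bit_not_zero_iff)

lemma bit_diff_one: "(a::bit) - b = 1 \<longleftrightarrow> a \<noteq> b"
  using bit_cases[of a] bit_cases[of b] by auto

lemma sign_cochain:
  fixes A :: "real^'n^'n"
  assumes diag: "\<forall>i. A$i$i < 0"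
    and minors: "\<forall>\<sigma>. clique_simplex A \<sigma> \<and> (card \<sigma> = 2 \<or> card \<sigma> = 3) \<longrightarrow> principal_det A \<sigma> = 0"
    and H: "H1_clique_vanishes (conn_adj A) TYPE(bit)"
  obtains g :: "'n \<Rightarrow> bit" where "\<forall>i j. conn_adj A i j \<longrightarrow> (A$i$j > 0 \<longleftrightarrow> g i \<noteq> g j)"
proof -
  define c :: "'n \<Rightarrow> 'n \<Rightarrow> bit" where "c i j = (if A$i$j > 0 then 1 else 0)" for i j
  have alt: "\<forall>i j. conn_adj A i j \<longrightarrow> c j i = - c i j"
  proof (intro allI impI)
    fix i j assume a: "conn_adj A i j"
    have "(0 < A$j$i) = (0 < A$i$j)" using edge_facts(3)[OF diag minors a] by simp
    then show "c j i = - c i j" by (simp add: c_def)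
  qed
  have coc: "\<forall>i j k. conn_adj A i j \<and> conn_adj A j k \<and> conn_adj A i k \<longrightarrow> c j k - c i k + c i j = 0"
  proof (intro allI impI)
    fix i j k assume h: "conn_adj A i j \<and> conn_adj A j k \<and> conn_adj A i k"
    have t: "A$i$j*A$j$k*A$k$i = A$i$i*A$j$j*A$k$k" using tri_prod[OF minors] h by blast
    have "A$i$i*A$j$j*A$k$k < 0" using diag by (simp add: mult_neg_neg mult_pos_neg)
    then have neg: "A$i$j*(A$j$k*A$k$i) < 0" using t by (simp add: mult.assoc)
    have n1: "A$i$j \<noteq> 0" "A$j$k \<noteq> 0" "A$i$k \<noteq> 0" using edge_facts[OF diag minors] h by blast+
    have ik: "A$i$k > 0 \<longleftrightarrow> A$k$i > 0" using edge_facts[OF diag minors] h by blast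
    show "c j k - c i k + c i j = 0"
      using neg n1 ik unfolding c_def
      by (cases "A$i$j > 0"; cases "A$j$k > 0"; cases "A$k$i > 0")
         (auto simp: mult_less_0_iff zero_less_mult_iff)
  qed
  obtain f :: "'n \<Rightarrow> bit" where f: "\<forall>i j. conn_adj A i j \<longrightarrow> c i j = f j - f i"
    using H alt coc unfolding H1_clique_vanishes_def by blast
  show ?thesis
  proof (rule that, intro allI impI)
    fix i j assume "conn_adj A i j"
    then have "c i j = f j - f i" using f by blast
    then show "A$i$j > 0 \<longleftrightarrow> f i \<noteq> f j" unfolding c_def
      by (metis bit_diff_one zero_neq_one)
  qed
qed

lemma ln3: "0 < (a::real) \<Longrightarrow> 0 < b \<Longrightarrow> 0 < c \<Longrightarrow> ln (a*b*c) = ln a + ln b + ln c"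
  by (simp add: ln_mult_pos)

lemma abs_factor:
  fixes A :: "real^'n^'n"
  assumes diag: "\<forall>i. A$i$i < 0"
    and minors: "\<forall>\<sigma>. clique_simplex A \<sigma> \<and> (card \<sigma> = 2 \<or> card \<sigma> = 3) \<longrightarrow> principal_det A \<sigma> = 0"
    and H: "H1_clique_vanishes (conn_adj A) TYPE(real)"
  obtains u v :: "'n \<Rightarrow> real" where "\<forall>i. u i > 0" "\<forall>i. v i > 0" "\<forall>i. u i * v i = - A$i$i"
    "\<forall>i j. conn_adj A i j \<longrightarrow> u i * v j = \<bar>A$i$j\<bar>"
proof -
  define s where "s i = ln (- A$i$i)" for i
  define c :: "'n \<Rightarrow> 'n \<Rightarrow> real" where "c i j = ln \<bar>A$i$j\<bar> - (s i + s j)/2" for i j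
  have lnedge: "ln \<bar>A$i$j\<bar> + ln \<bar>A$j$i\<bar> = s i + s j" if "conn_adj A i j" for i j
  proof -
    note ef = edge_facts[OF diag minors that]
    have "ln \<bar>A$i$j\<bar> + ln \<bar>A$j$i\<bar> = ln (\<bar>A$i$j\<bar> * \<bar>A$j$i\<bar>)" using ln_mult[of "\<bar>A$i$j\<bar>" "\<bar>A$j$i\<bar>"] ef by simp
    also have "\<dots> = ln ((- A$i$i) * (- A$j$j))" using ef by simp
    also have "\<dots> = s i + s j" unfolding s_def by (rule ln_mult_pos) (use diag in auto)
    finally show ?thesis .
  qed
  have alt: "\<forall>i j. conn_adj A i j \<longrightarrow> c j i = - c i j"
  proof (intro allI impI)
    fix i j assume "conn_adj A i j"
    from lnedge[OF this] show "c j i = - c i j" unfolding c_def by (simp add: field_simps)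
  qed
  have coc: "\<forall>i j k. conn_adj A i j \<and> conn_adj A j k \<and> conn_adj A i k \<longrightarrow> c j k - c i k + c i j = 0"
  proof (intro allI impI)
    fix i j k assume h: "conn_adj A i j \<and> conn_adj A j k \<and> conn_adj A i k"
    have t: "A$i$j*A$j$k*A$k$i = A$i$i*A$j$j*A$k$k" using tri_prod[OF minors] h by blast
    have n1: "A$i$j \<noteq> 0" "A$j$k \<noteq> 0" "A$k$i \<noteq> 0" using edge_facts[OF diag minors] h by blast+
    have neg: "A$i$i*A$j$j*A$k$k < 0" using diag by (simp add: mult_neg_neg mult_pos_neg)
    have "\<bar>A$i$j\<bar>*\<bar>A$j$k\<bar>*\<bar>A$k$i\<bar> = \<bar>A$i$j*A$j$k*A$k$i\<bar>" by (simp add: abs_mult)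
    also have "\<dots> = \<bar>A$i$i*A$j$j*A$k$k\<bar>" using t by simp
    also have "\<dots> = -(A$i$i*A$j$j*A$k$k)" using neg by simp
    also have "\<dots> = (-A$i$i)*(-A$j$j)*(-A$k$k)" by simp
    finally have E: "\<bar>A$i$j\<bar>*\<bar>A$j$k\<bar>*\<bar>A$k$i\<bar> = (-A$i$i)*(-A$j$j)*(-A$k$k)" .
    have "ln \<bar>A$i$j\<bar> + ln \<bar>A$j$k\<bar> + ln \<bar>A$k$i\<bar> = ln (\<bar>A$i$j\<bar>*\<bar>A$j$k\<bar>*\<bar>A$k$i\<bar>)"
      by (rule ln3[symmetric]) (use n1 in auto)
    also have "\<dots> = ln ((-A$i$i)*(-A$j$j)*(-A$k$k))" by (simp only: E)
    also have "\<dots> = s i + s j + s k" unfolding s_def by (rule ln3) (use diag in auto)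
    finally have l3: "ln \<bar>A$i$j\<bar> + ln \<bar>A$j$k\<bar> + ln \<bar>A$k$i\<bar> = s i + s j + s k" .
    have l2: "ln \<bar>A$i$k\<bar> + ln \<bar>A$k$i\<bar> = s i + s k" using lnedge h by blast
    have "c j k - c i k + c i j = ln \<bar>A$j$k\<bar> - ln \<bar>A$i$k\<bar> + ln \<bar>A$i$j\<bar> - s j"
      unfolding c_def by (simp add: field_simps)
    then show "c j k - c i k + c i j = 0" using l3 l2 by linarith
  qed
  obtain f :: "'n \<Rightarrow> real" where f: "\<forall>i j. conn_adj A i j \<longrightarrow> c i j = f j - f i"
    using H alt coc unfolding H1_clique_vanishes_def by blast
  define u where "u i = exp (s i / 2 - f i)" for i
  define v where "v i = exp (s i / 2 + f i)" for i
  have uv: "u i * v j = exp (s i / 2 + s j / 2 + (f j - f i))" for i j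
    unfolding u_def v_def by (simp add: exp_add[symmetric] algebra_simps)
  show ?thesis
  proof (rule that)
    show "\<forall>i. u i > 0" "\<forall>i. v i > 0" by (simp_all add: u_def v_def)
    show "\<forall>i. u i * v i = - A$i$i"
    proof
      fix i
      have "u i * v i = exp (s i)" using uv[of i i] by simp
      then show "u i * v i = - A$i$i" using diag by (simp add: s_def)
    qed
    show "\<forall>i j. conn_adj A i j \<longrightarrow> u i * v j = \<bar>A$i$j\<bar>"
    proof (intro allI impI)
      fix i j assume h: "conn_adj A i j"
      have "A$i$j \<noteq> 0" using edge_facts[OF diag minors h] by blast
      moreover have "f j - f i = c i j" using f h by auto
      ultimately have "s i / 2 + s j / 2 + (f j - f i) = ln \<bar>A$i$j\<bar>" by (simp add: c_def field_simps)
      then show "u i * v j = \<bar>A$i$j\<bar>" using uv[of i j] \<open>A$i$j \<noteq> 0\<close> by simp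
    qed
  qed
qed


theorem mainTheorem11:
  fixes A :: "real^'n^'n"
  assumes diag: "\<forall>i. A$i$i < 0"
    and minors: "\<forall>\<sigma>. clique_simplex A \<sigma> \<and> (card \<sigma> = 2 \<or> card \<sigma> = 3) \<longrightarrow> principal_det A \<sigma> = 0"
  shows "(H1_clique_vanishes (conn_adj A) TYPE(bit) \<longrightarrow> bipartite_matrix A)
       \<and> (H1_clique_vanishes (conn_adj A) TYPE(real) \<longrightarrow>
            (\<exists>B. is_completion A (abs_matrix A) B \<and> rank B = 1))
       \<and> (H1_clique_vanishes (conn_adj A) TYPE(real) \<and> H1_clique_vanishes (conn_adj A) TYPE(bit) \<longrightarrow>
            (\<exists>B. is_completion A A B \<and> rank B = 1))"
proof -
  have nonadj: "A$i$j = 0 \<and> A$j$i = 0" if "i \<noteq> j" "\<not> conn_adj A i j" for i j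
    using that by (auto simp: conn_adj_def)
  have symadj: "conn_adj A j i" if "conn_adj A i j" for i j using that by (auto simp: conn_adj_def)
  have neg: "A$i$j < 0" if "conn_adj A i j" "\<not> A$i$j > 0" for i j
    using that edge_facts(1)[OF diag minors that(1)] by linarith
  have PA: "bipartite_matrix A" if H: "H1_clique_vanishes (conn_adj A) TYPE(bit)"
  proof -
    obtain g :: "'n \<Rightarrow> bit" where g: "\<forall>i j. conn_adj A i j \<longrightarrow> (A$i$j > 0 \<longleftrightarrow> g i \<noteq> g j)"
      using sign_cochain[OF diag minors H] by blast
    show "bipartite_matrix A"
      unfolding bipartite_matrix_def
    proof (rule exI[of _ "{i. g i = 1}"], rule conjI; intro allI impI)
      fix i j assume h: "i \<in> {i. g i = 1} \<and> j \<notin> {i. g i = 1}"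
      then have ij: "i \<noteq> j" "g i \<noteq> g j" by auto
      show "A$i$j \<ge> 0 \<and> A$j$i \<ge> 0"
      proof (cases "conn_adj A i j")
        case True
        then show ?thesis using g symadj[OF True] ij by (metis less_imp_le)
      next
        case False then show ?thesis using nonadj[OF ij(1)] by simp
      qed
    next
      fix i j assume h: "(i \<in> {i. g i = 1} \<and> j \<in> {i. g i = 1}) \<or> (i \<notin> {i. g i = 1} \<and> j \<notin> {i. g i = 1})"
      then have gij: "g i = g j" using bit_cases[of "g i"] bit_cases[of "g j"] by auto
      show "A$i$j \<le> 0 \<and> A$j$i \<le> 0"
      proof (cases "i = j")
        case True then show ?thesis using diag by (simp add: less_imp_le)
      next
        case ij: False
        show ?thesis
        proof (cases "conn_adj A i j")
          case True
          then show ?thesis using g symadj[OF True] gij by (metis not_less)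
        next
          case False then show ?thesis using nonadj[OF ij] by simp
        qed
      qed
    qed
  qed
  have PB: "\<exists>B. is_completion A (abs_matrix A) B \<and> rank B = 1" if H: "H1_clique_vanishes (conn_adj A) TYPE(real)"
  proof -
    obtain u v :: "'n \<Rightarrow> real" where u: "\<forall>i. u i > 0" and v: "\<forall>i. v i > 0"
      and uvd: "\<forall>i. u i * v i = - A$i$i" and uve: "\<forall>i j. conn_adj A i j \<longrightarrow> u i * v j = \<bar>A$i$j\<bar>"
      using abs_factor[OF diag minors H] by blast
    let ?u = "(\<chi> i. u i) :: real^'n" and ?v = "(\<chi> i. v i) :: real^'n"
    have nz: "?u \<noteq> 0" "?v \<noteq> 0" using u v by (metis vec_lambda_beta zero_index less_irrefl)+
    have "rank ((\<chi> i j. ?u$i * ?v$j) :: real^'n^'n) = 1" by (rule rank_outer[OF nz])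
    moreover have "is_completion A (abs_matrix A) ((\<chi> i j. ?u$i * ?v$j) :: real^'n^'n)"
      unfolding is_completion_def abs_matrix_def using uvd uve diag
      by (simp add: abs_of_neg)
    ultimately show "\<exists>B. is_completion A (abs_matrix A) B \<and> rank B = 1" by blast
  qed
  have PC: "\<exists>B. is_completion A A B \<and> rank B = 1" if H: "H1_clique_vanishes (conn_adj A) TYPE(real) \<and> H1_clique_vanishes (conn_adj A) TYPE(bit)"
  proof -
    obtain u v :: "'n \<Rightarrow> real" where u: "\<forall>i. u i > 0" and v: "\<forall>i. v i > 0"
      and uvd: "\<forall>i. u i * v i = - A$i$i" and uve: "\<forall>i j. conn_adj A i j \<longrightarrow> u i * v j = \<bar>A$i$j\<bar>"
      using abs_factor[OF diag minors] H by blast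
    obtain g :: "'n \<Rightarrow> bit" where g: "\<forall>i j. conn_adj A i j \<longrightarrow> (A$i$j > 0 \<longleftrightarrow> g i \<noteq> g j)"
      using sign_cochain[OF diag minors] H by blast
    define e :: "'n \<Rightarrow> real" where "e i = (if g i = 1 then -1 else 1)" for i
    have e2: "e i * e i = 1" for i by (simp add: e_def)
    have ee: "e i * e j = (if g i = g j then 1 else -1)" for i j
      using bit_cases[of "g i"] bit_cases[of "g j"] by (auto simp: e_def)
    let ?u = "(\<chi> i. - (e i * u i)) :: real^'n" and ?v = "(\<chi> i. e i * v i) :: real^'n"
    have en: "e i \<noteq> 0" for i by (simp add: e_def)
    have nz: "?u \<noteq> 0" "?v \<noteq> 0" using u v en
      by (metis vec_lambda_beta zero_index less_irrefl mult_eq_0_iff neg_equal_0_iff_equal)+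
    have "rank ((\<chi> i j. ?u$i * ?v$j) :: real^'n^'n) = 1" by (rule rank_outer[OF nz])
    moreover have "is_completion A A ((\<chi> i j. ?u$i * ?v$j) :: real^'n^'n)"
      unfolding is_completion_def
    proof (intro conjI allI impI)
      fix i
      have "- (e i * u i) * (e i * v i) = - ((e i * e i) * (u i * v i))" by (simp add: algebra_simps)
      then show "(\<chi> i j. ?u$i * ?v$j) $ i $ i = A $ i $ i" using uvd e2 by simp
    next
      fix i j assume a: "conn_adj A i j"
      have "- (e i * u i) * (e j * v j) = - ((e i * e j) * (u i * v j))" by (simp add: algebra_simps)
      also have "\<dots> = A$i$j"
      proof (cases "g i = g j")
        case True
        then have "A$i$j < 0" using g a neg by blast
        then show ?thesis using True ee uve a by simp
      next
        case False
        then have "A$i$j > 0" using g a by blast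
        then show ?thesis using False ee uve a by simp
      qed
      finally show "(\<chi> i j. ?u$i * ?v$j) $ i $ j = A $ i $ j" by simp
    qed
    ultimately show "\<exists>B. is_completion A A B \<and> rank B = 1" by blast
  qed
  show ?thesis using PA PB PC by blast
qed

end
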